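(* Let $a\in\mathbb C\setminus\{0\}$ and $b\in\mathbb C$. Then $\{\mathrm{comm}(\widehat{\mathcal B}(a,b)_\lambda):\lambda\text{ a partition}\}$ is a multiplicative basis of $\mathsf{Sym}$, i.e. a basis with $\mathrm{comm}(\widehat{\mathcal B}(a,b)_\lambda)\,\mathrm{comm}(\widehat{\mathcal B}(a,b)_\mu)=\mathrm{comm}(\widehat{\mathcal B}(a,b)_{\lambda\cdot\mu})$ for all partitions $\lambda,\mu$.
   Context: $\mathsf{NSym}$ is the algebra of noncommutative symmetric functions over $\mathbb C$ with basis $H_\alpha=H_{\alpha_1}\cdots H_{\alpha_l}$; $\mathsf{Sym}$ is the algebra of symmetric functions and $\mathrm{comm}:\mathsf{NSym}\to\mathsf{Sym}$ the algebra homomorphism $H_n\mapsto h_n$. For a composition $\alpha$ of $n$, $\mathrm{set}(\alpha)=\{\alpha_1,\dots,\alpha_1+\dots+\alpha_{l-1}\}$, $\ell(\alpha)=l$, $\beta\preceq\alpha$ means $\mathrm{set}(\alpha)\subseteq\mathrm{set}(\beta)$. $\widehat{\mathcal B}(a,b)_\alpha=\sum_{\beta\preceq\alpha}a^{n-\ell(\beta)}b^{\ell(\beta)-\ell(\alpha)}H_\beta$ (convention $0^0=1$), $1$ for the empty composition; a partition is regarded as a weakly decreasing composition, and for partitions $\lambda,\mu$, $\lambda\cdot\mu$ denotes the partition obtained by sorting the concatenation of their parts. *)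

theory Defs
  imports Complex_Main "HOL-Library.Multiset" "HOL-Library.Poly_Mapping"
begin

text \<open>Model of Sym: Sym is the polynomial algebra over C freely generated by h_1, h_2, ...
  An element is a finitely supported map from monomials (multisets of variable indices)
  to complex coefficients; the monomial with multiset m is the product of h_k over k in m.
  Sym is the subalgebra whose monomials only involve indices k >= 1.\<close>

type_synonym sym = "nat multiset \<Rightarrow>\<^sub>0 complex"

definition Sym :: "sym set" where
  "Sym = {p. \<forall>m \<in> Poly_Mapping.keys p. 0 \<notin># m}"

definition sscale :: "complex \<Rightarrow> sym \<Rightarrow> sym" where
  "sscale c p = Poly_Mapping.single {#} c * p"

text \<open>comm(H_alpha) = h_{alpha_1} ... h_{alpha_l}.\<close>
definition commH :: "nat list \<Rightarrow> sym" where
  "commH \<alpha> = Poly_Mapping.single (mset \<alpha>) 1"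

definition compositions :: "nat \<Rightarrow> nat list set" where
  "compositions n = {\<beta>. 0 \<notin> set \<beta> \<and> sum_list \<beta> = n}"

definition comp_set :: "nat list \<Rightarrow> nat set" where
  "comp_set \<alpha> = {sum_list (take i \<alpha>) | i. 1 \<le> i \<and> i < length \<alpha>}"

definition refines :: "nat list \<Rightarrow> nat list \<Rightarrow> bool" where
  "refines \<beta> \<alpha> \<longleftrightarrow> comp_set \<alpha> \<subseteq> comp_set \<beta>"

text \<open>comm(\<widehat>B(a,b)_alpha) for a composition alpha of n (0^0 = 1 holds for power).\<close>
definition commBhat :: "complex \<Rightarrow> complex \<Rightarrow> nat list \<Rightarrow> sym" where
  "commBhat a b \<alpha> =
     (\<Sum>\<beta> \<in> {\<beta> \<in> compositions (sum_list \<alpha>). refines \<beta> \<alpha>}.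
        sscale (a ^ (sum_list \<alpha> - length \<beta>) * b ^ (length \<beta> - length \<alpha>)) (commH \<beta>))"

definition is_partition :: "nat list \<Rightarrow> bool" where
  "is_partition lam \<longleftrightarrow> sorted_wrt (\<ge>) lam \<and> 0 \<notin> set lam"

definition part_mult :: "nat list \<Rightarrow> nat list \<Rightarrow> nat list" where
  "part_mult lam mu = rev (sort (lam @ mu))"

end

theory Submission imports Defs begin

lemma lookup_sscale: "Poly_Mapping.lookup (sscale c p) m = c * Poly_Mapping.lookup p m"
  unfolding sscale_def mult_map_scale_conv_mult[symmetric]
  by (simp add: Poly_Mapping.map.rep_eq when_def)

lemma sscale_add_left: "sscale (x + y) p = sscale x p + sscale y p"
  by (simp add: sscale_def single_add distrib_right)

lemma sscale_add_right: "sscale x (p + q) = sscale x p + sscale x q"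
  by (simp add: sscale_def distrib_left)

lemma sscale_diff_right: "sscale x (p - q) = sscale x p - sscale x q"
  by (simp add: sscale_def right_diff_distrib)

lemma sscale_sscale: "sscale x (sscale y p) = sscale (x * y) p"
  by (simp add: sscale_def mult.assoc[symmetric] mult_single)

lemma sscale_one: "sscale 1 p = p"
  by (simp add: sscale_def)

lemma sscale_zero: "sscale 0 p = 0"
  by (simp add: sscale_def)

lemma sscale_mult: "sscale x p * sscale y q = sscale (x * y) (p * q)"
  by (simp add: sscale_def mult_single algebra_simps)

lemma sscale_sum: "sscale x (sum f A) = (\<Sum>i\<in>A. sscale x (f i))"
  by (simp add: sscale_def sum_distrib_left)

lemma commH_append: "commH (xs @ ys) = commH xs * commH ys"
  by (simp add: commH_def mult_single)

lemma len_le_sum: "0 \<notin> set xs \<Longrightarrow> length xs \<le> sum_list xs"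
  by (induction xs) auto

lemma comp_finite: "finite (compositions n)"
proof -
  have "compositions n \<subseteq> {xs. set xs \<subseteq> {..n} \<and> length xs \<le> n}"
    unfolding compositions_def using len_le_sum member_le_sum_list by fastforce
  then show ?thesis by (rule finite_subset) (simp add: finite_lists_length_le)
qed

lemma pos_sum0: "0 \<notin> set (xs::nat list) \<Longrightarrow> sum_list xs = 0 \<Longrightarrow> xs = []"
  by (cases xs) (auto simp: add_is_0)

lemma comp_set_Nil[simp]: "comp_set [] = {}" and comp_set_single[simp]: "comp_set [k] = {}"
  by (auto simp: comp_set_def)

lemma comp_set_append:
  assumes "g \<noteq> []" "d \<noteq> []"
  shows "comp_set (g @ d) = comp_set g \<union> {sum_list g} \<union> (\<lambda>x. sum_list g + x) ` comp_set d"
proof (intro equalityI subsetI)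
  fix x assume "x \<in> comp_set (g @ d)"
  then obtain i where i: "1 \<le> i" "i < length g + length d" "x = sum_list (take i (g @ d))"
    by (auto simp: comp_set_def)
  show "x \<in> comp_set g \<union> {sum_list g} \<union> (\<lambda>x. sum_list g + x) ` comp_set d"
  proof (cases "i < length g")
    case True then show ?thesis using i by (auto simp: comp_set_def)
  next
    case False
    show ?thesis
    proof (cases "i = length g")
      case True then show ?thesis using i by auto
    next
      case False
      then have "i - length g \<ge> 1" "i - length g < length d" using \<open>\<not> i < length g\<close> i by auto
      moreover have "x = sum_list g + sum_list (take (i - length g) d)"
        using i \<open>\<not> i < length g\<close> by simp
      ultimately show ?thesis by (auto simp: comp_set_def)
    qed
  qed
next
  fix x assume "x \<in> comp_set g \<union> {sum_list g} \<union> (\<lambda>x. sum_list g + x) ` comp_set d"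
  then consider "x \<in> comp_set g" | "x = sum_list g" | "x \<in> (\<lambda>x. sum_list g + x) ` comp_set d" by blast
  then show "x \<in> comp_set (g @ d)"
  proof cases
    case 1
    then obtain i where "1 \<le> i" "i < length g" "x = sum_list (take i g)" by (auto simp: comp_set_def)
    then show ?thesis unfolding comp_set_def by (intro CollectI exI[of _ i]) auto
  next
    case 2
    then show ?thesis using assms unfolding comp_set_def
      by (intro CollectI exI[of _ "length g"]) (auto simp: Suc_le_eq)
  next
    case 3
    then obtain j where "1 \<le> j" "j < length d" "x = sum_list g + sum_list (take j d)" by (auto simp: comp_set_def)
    then show ?thesis unfolding comp_set_def
      by (intro CollectI exI[of _ "length g + j"]) auto
  qed
qed

lemma comp_set_bounds:
  assumes "0 \<notin> set xs" "x \<in> comp_set xs" shows "0 < x" "x < sum_list xs"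
proof -
  obtain i where i: "1 \<le> i" "i < length xs" "x = sum_list (take i xs)"
    using assms by (auto simp: comp_set_def)
  have s: "sum_list xs = sum_list (take i xs) + sum_list (drop i xs)"
    by (metis append_take_drop_id sum_list_append)
  have "take i xs \<noteq> []" "drop i xs \<noteq> []" using i by auto
  moreover have "0 \<notin> set (take i xs)" "0 \<notin> set (drop i xs)" using assms(1)
    by (meson in_set_takeD, meson in_set_dropD)
  ultimately have "sum_list (take i xs) > 0" "sum_list (drop i xs) > 0"
    using pos_sum0 by blast+
  then show "0 < x" "x < sum_list xs" using s i by auto
qed

lemma comp_set_Cons:
  assumes "al \<noteq> []"
  shows "comp_set (k # al) = {k} \<union> (\<lambda>x. k + x) ` comp_set al"
  using comp_set_append[of "[k]" al] assms by simp

lemma split_refines: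
  assumes k: "0 < k" and al: "0 \<notin> set al" "al \<noteq> []"
  shows "(be \<in> compositions (k + sum_list al) \<and> refines be (k # al)) \<longleftrightarrow>
    (\<exists>g d. be = g @ d \<and> g \<in> compositions k \<and> d \<in> compositions (sum_list al) \<and> refines d al)"
proof
  assume A: "be \<in> compositions (k + sum_list al) \<and> refines be (k # al)"
  then have pos: "0 \<notin> set be" and sb: "sum_list be = k + sum_list al"
    by (auto simp: compositions_def)
  from A have sub: "{k} \<union> (\<lambda>x. k + x) ` comp_set al \<subseteq> comp_set be"
    using comp_set_Cons[OF al(2)] by (simp add: refines_def)
  then have "k \<in> comp_set be" by auto
  then obtain i where i: "1 \<le> i" "i < length be" "k = sum_list (take i be)"
    by (auto simp: comp_set_def)
  define g where "g = take i be"
  define d where "d = drop i be"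
  have be: "be = g @ d" by (simp add: g_def d_def)
  have gne: "g \<noteq> []" and dne: "d \<noteq> []" using i by (auto simp: g_def d_def)
  have gpos: "0 \<notin> set g" and dpos: "0 \<notin> set d" using pos be by auto
  have sg: "sum_list g = k" using i by (simp add: g_def)
  have sd: "sum_list d = sum_list al" using sb be sg by simp
  have cs: "comp_set be = comp_set g \<union> {k} \<union> (\<lambda>x. k + x) ` comp_set d"
    using comp_set_append[OF gne dne] be sg by simp
  have "comp_set al \<subseteq> comp_set d"
  proof
    fix x assume x: "x \<in> comp_set al"
    have "k + x \<in> comp_set be" using sub x by auto
    moreover have "0 < x" using comp_set_bounds[OF al(1) x] by simp
    moreover have "\<forall>y\<in>comp_set g. y < k" using comp_set_bounds(2)[OF gpos] sg by auto
    ultimately show "x \<in> comp_set d" unfolding cs by force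
  qed
  then show "\<exists>g d. be = g @ d \<and> g \<in> compositions k \<and> d \<in> compositions (sum_list al) \<and> refines d al"
    using be gpos dpos sg sd by (auto simp: compositions_def refines_def)
next
  assume "\<exists>g d. be = g @ d \<and> g \<in> compositions k \<and> d \<in> compositions (sum_list al) \<and> refines d al"
  then obtain g d where be: "be = g @ d" and g: "g \<in> compositions k"
    and d: "d \<in> compositions (sum_list al)" and r: "refines d al" by blast
  have gne: "g \<noteq> []" using g k by (auto simp: compositions_def)
  have "sum_list al > 0" using al pos_sum0 by blast
  moreover have "sum_list d = sum_list al" using d by (simp add: compositions_def)
  ultimately have dne: "d \<noteq> []" by (metis less_irrefl sum_list.Nil)
  have sg: "sum_list g = k" using g by (simp add: compositions_def)
  have cs: "comp_set be = comp_set g \<union> {k} \<union> (\<lambda>x. k + x) ` comp_set d"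
    using comp_set_append[OF gne dne] be sg by simp
  show "be \<in> compositions (k + sum_list al) \<and> refines be (k # al)"
    using g d r be cs comp_set_Cons[OF al(2)]
    by (auto simp: compositions_def refines_def)
qed

lemma append_inj_pos:
  assumes "g @ d = g' @ d'" "sum_list g = sum_list g'" "0 \<notin> set g" "0 \<notin> set (g'::nat list)"
  shows "g = g' \<and> d = d'"
proof -
  from assms(1) obtain us where "(g = g' @ us \<and> us @ d = d') \<or> (g @ us = g' \<and> d = us @ d')"
    by (auto simp: append_eq_append_conv2)
  then show ?thesis
  proof
    assume h: "g = g' @ us \<and> us @ d = d'"
    then have "us = []" using assms(2,3) pos_sum0[of us] by auto
    then show ?thesis using h by simp
  next
    assume h: "g @ us = g' \<and> d = us @ d'"
    then have "us = []" using assms(2,4) pos_sum0[of us] by auto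
    then show ?thesis using h by simp
  qed
qed

lemma refines_len:
  assumes "0 \<notin> set al" "be \<in> compositions (sum_list al)" "refines be al"
  shows "length al \<le> length be \<and> (length be \<le> length al \<longrightarrow> be = al)"
  using assms
proof (induction al arbitrary: be)
  case Nil
  then show ?case using pos_sum0 by (auto simp: compositions_def)
next
  case (Cons k al)
  show ?case
  proof (cases "al = []")
    case True
    then have "be \<noteq> []" using Cons.prems by (auto simp: compositions_def)
    moreover have "length be \<le> 1 \<Longrightarrow> be = [k]"
      using Cons.prems True by (cases be) (auto simp: compositions_def)
    ultimately show ?thesis using True by (cases be) auto
  next
    case False
    have k: "0 < k" and alp: "0 \<notin> set al" using Cons.prems by auto
    obtain g d where be: "be = g @ d" and g: "g \<in> compositions k"
      and d: "d \<in> compositions (sum_list al)" and r: "refines d al"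
      using split_refines[OF k alp False, of be] Cons.prems by auto
    have IH: "length al \<le> length d \<and> (length d \<le> length al \<longrightarrow> d = al)"
      using Cons.IH[OF alp d r] .
    have gne: "g \<noteq> []" using g k by (auto simp: compositions_def)
    have "length g \<le> 1 \<Longrightarrow> g = [k]"
      using g gne by (cases g) (auto simp: compositions_def)
    then show ?thesis using IH gne be by (cases g) auto
  qed
qed

definition Bs :: "nat list \<Rightarrow> nat list set" where
  "Bs al = {be \<in> compositions (sum_list al). refines be al}"

lemma Bs_finite: "finite (Bs al)"
  unfolding Bs_def using comp_finite by simp

lemma commBhat_Bs: "commBhat a b al = (\<Sum>be\<in>Bs al.
   sscale (a ^ (sum_list al - length be) * b ^ (length be - length al)) (commH be))"
  unfolding commBhat_def Bs_def ..

lemma commBhat_Nil: "commBhat a b [] = 1"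
proof -
  have "Bs [] = {[]}" by (auto simp: Bs_def compositions_def refines_def pos_sum0)
  then show ?thesis by (simp add: commBhat_Bs sscale_def commH_def)
qed

lemma Bs_single: "Bs [k] = compositions k"
  by (auto simp: Bs_def refines_def)

lemma commBhat_Cons:
  assumes k: "0 < k" and al: "0 \<notin> set al" "al \<noteq> []"
  shows "commBhat a b (k # al) = commBhat a b [k] * commBhat a b al"
proof -
  let ?n = "sum_list al"
  let ?F = "\<lambda>be. sscale (a ^ ((k + ?n) - length be) * b ^ (length be - Suc (length al))) (commH be)"
  let ?G = "\<lambda>g. sscale (a ^ (k - length g) * b ^ (length g - 1)) (commH g)"
  let ?D = "\<lambda>d. sscale (a ^ (?n - length d) * b ^ (length d - length al)) (commH d)"
  have eqB: "Bs (k # al) = (\<lambda>(g, d). g @ d) ` (compositions k \<times> Bs al)"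
  proof (intro equalityI subsetI)
    fix be assume "be \<in> Bs (k # al)"
    then have "be \<in> compositions (k + sum_list al) \<and> refines be (k # al)"
      by (simp add: Bs_def)
    then obtain g d where "be = g @ d" "g \<in> compositions k" "d \<in> compositions (sum_list al)" "refines d al"
      using split_refines[OF k al, of be] by blast
    then have "be = g @ d" "g \<in> compositions k" "d \<in> Bs al" by (auto simp: Bs_def)
    then show "be \<in> (\<lambda>(g, d). g @ d) ` (compositions k \<times> Bs al)"
      by (intro image_eqI[of _ _ "(g, d)"]) auto
  next
    fix be assume "be \<in> (\<lambda>(g, d). g @ d) ` (compositions k \<times> Bs al)"
    then obtain g d where "be = g @ d" "g \<in> compositions k" "d \<in> Bs al" by auto
    then have "be \<in> compositions (k + sum_list al) \<and> refines be (k # al)"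
      using split_refines[OF k al, of be] unfolding Bs_def by blast
    then show "be \<in> Bs (k # al)" by (simp add: Bs_def)
  qed
  have inj: "inj_on (\<lambda>(g, d). g @ d) (compositions k \<times> Bs al)"
  proof (rule inj_onI)
    fix x y assume x: "x \<in> compositions k \<times> Bs al" and y: "y \<in> compositions k \<times> Bs al"
      and e: "(\<lambda>(g, d). g @ d) x = (\<lambda>(g, d). g @ d) y"
    obtain g d where [simp]: "x = (g, d)" by (cases x)
    obtain g' d' where [simp]: "y = (g', d')" by (cases y)
    have "g @ d = g' @ d'" using e by simp
    moreover have "sum_list g = sum_list g'" "0 \<notin> set g" "0 \<notin> set g'"
      using x y by (auto simp: compositions_def)
    ultimately have "g = g' \<and> d = d'" by (rule append_inj_pos)
    then show "x = y" by simp
  qed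
  have "commBhat a b (k # al) = (\<Sum>be\<in>Bs (k # al). ?F be)"
    by (simp add: commBhat_Bs)
  also have "\<dots> = (\<Sum>p\<in>compositions k \<times> Bs al. ?F ((\<lambda>(g, d). g @ d) p))"
    unfolding eqB by (simp add: sum.reindex[OF inj] comp_def)
  also have "\<dots> = (\<Sum>g\<in>compositions k. \<Sum>d\<in>Bs al. ?F (g @ d))"
    by (simp add: sum.cartesian_product split_def)
  also have "\<dots> = (\<Sum>g\<in>compositions k. \<Sum>d\<in>Bs al. ?G g * ?D d)"
  proof (intro sum.cong refl)
    fix g d assume g: "g \<in> compositions k" and d: "d \<in> Bs al"
    have g1: "1 \<le> length g" using g k by (cases g) (auto simp: compositions_def)
    have g2: "length g \<le> k" using g len_le_sum[of g] by (auto simp: compositions_def)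
    have d1: "length al \<le> length d" using refines_len[OF al(1)] d by (auto simp: Bs_def)
    have d2: "length d \<le> ?n" using d len_le_sum[of d] by (auto simp: Bs_def compositions_def)
    have e1: "(k + ?n) - length (g @ d) = (k - length g) + (?n - length d)" using g2 d2 by simp
    have e2: "length (g @ d) - Suc (length al) = (length g - 1) + (length d - length al)"
      using g1 d1 by simp
    show "?F (g @ d) = ?G g * ?D d"
      unfolding sscale_mult commH_append e1 e2 power_add by (simp only: mult_ac)
  qed
  also have "\<dots> = (\<Sum>g\<in>compositions k. ?G g) * (\<Sum>d\<in>Bs al. ?D d)"
    by (simp add: sum_product)
  also have "\<dots> = commBhat a b [k] * commBhat a b al"
    by (simp add: commBhat_Bs Bs_single)
  finally show ?thesis .
qed

lemma commBhat_prod: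
  assumes "0 \<notin> set al"
  shows "commBhat a b al = prod_list (map (\<lambda>k. commBhat a b [k]) al)"
  using assms
proof (induction al)
  case Nil
  then show ?case by (simp add: commBhat_Nil)
next
  case (Cons k al)
  then show ?case
    by (cases "al = []") (simp_all add: commBhat_Cons)
qed

lemma Bs_self: "0 \<notin> set al \<Longrightarrow> al \<in> Bs al"
  by (simp add: Bs_def compositions_def refines_def)

lemma lookup_commH: "Poly_Mapping.lookup (commH be) m = (if mset be = m then 1 else 0)"
  by (simp add: commH_def lookup_single when_def)

lemma lookup_commBhat:
  assumes al: "0 \<notin> set al" and m: "size m \<le> length al"
  shows "Poly_Mapping.lookup (commBhat a b al) m = (if m = mset al then a ^ (sum_list al - length al) else 0)"
proof -
  have "Poly_Mapping.lookup (commBhat a b al) m = (\<Sum>be\<in>Bs al.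
     (a ^ (sum_list al - length be) * b ^ (length be - length al)) * (if mset be = m then 1 else 0))"
    by (simp add: commBhat_Bs lookup_sum lookup_sscale lookup_commH)
  also have "\<dots> = (\<Sum>be\<in>Bs al. if be = al then (if m = mset al then a ^ (sum_list al - length al) else 0) else 0)"
  proof (rule sum.cong[OF refl])
    fix be assume be: "be \<in> Bs al"
    show "(a ^ (sum_list al - length be) * b ^ (length be - length al)) * (if mset be = m then 1 else 0)
      = (if be = al then (if m = mset al then a ^ (sum_list al - length al) else 0) else 0)"
    proof (cases "mset be = m")
      case True
      then have "length be \<le> length al" using m by (metis size_mset)
      then have "be = al" using refines_len[OF al] be by (auto simp: Bs_def)
      then show ?thesis using True by simp
    next
      case False
      then show ?thesis by auto
    qed
  qed
  also have "\<dots> = (if m = mset al then a ^ (sum_list al - length al) else 0)"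
    using Bs_self[OF al] Bs_finite[of al] by (simp add: sum.delta')
  finally show ?thesis .
qed

lemma partition_unique:
  assumes "is_partition l" "is_partition l'" "mset l = mset l'"
  shows "l = l'"
proof -
  have s1: "sorted (rev l)" and s2: "sorted (rev l')"
    using assms by (metis is_partition_def sorted_wrt_rev)+
  have "sort (rev l') = rev l" using properties_for_sort[of "rev l" "rev l'"] s1 assms(3) by simp
  moreover have "sort (rev l') = rev l'" using sorted_sort_id[OF s2] .
  ultimately show ?thesis by simp
qed

lemma commBhat_mset:
  assumes "0 \<notin> set al"
  shows "commBhat a b al = prod_mset (image_mset (\<lambda>k. commBhat a b [k]) (mset al))"
  using commBhat_prod[OF assms] by (simp add: prod_mset_prod_list[symmetric])

lemma keys_sscale: "Poly_Mapping.keys (sscale c p) \<subseteq> Poly_Mapping.keys p"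
  by (auto simp: in_keys_iff lookup_sscale)

lemma commBhat_Sym: "commBhat a b al \<in> Sym"
proof -
  have "Poly_Mapping.keys (commBhat a b al) \<subseteq> (\<Union>be\<in>Bs al. Poly_Mapping.keys
     (sscale (a ^ (sum_list al - length be) * b ^ (length be - length al)) (commH be)))"
    unfolding commBhat_Bs by (rule keys_sum)
  also have "\<dots> \<subseteq> (\<Union>be\<in>Bs al. {mset be})"
    using keys_sscale by (fastforce simp: commH_def)
  finally show ?thesis
    by (auto simp: Sym_def Bs_def compositions_def)
qed

definition V :: "complex \<Rightarrow> complex \<Rightarrow> sym set" where
  "V a b = {p. \<exists>S c. finite S \<and> (\<forall>lam\<in>S. is_partition lam)
          \<and> p = (\<Sum>lam\<in>S. sscale (c lam) (commBhat a b lam))}"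

lemma V_zero: "0 \<in> V a b"
  unfolding V_def by (intro CollectI exI[of _ "{}"]) auto

lemma V_add:
  assumes "p \<in> V a b" "q \<in> V a b" shows "p + q \<in> V a b"
proof -
  obtain S c where S: "finite S" "\<forall>lam\<in>S. is_partition lam"
    "p = (\<Sum>lam\<in>S. sscale (c lam) (commBhat a b lam))" using assms(1) by (auto simp: V_def)
  obtain S' c' where S': "finite S'" "\<forall>lam\<in>S'. is_partition lam"
    "q = (\<Sum>lam\<in>S'. sscale (c' lam) (commBhat a b lam))" using assms(2) by (auto simp: V_def)
  let ?c = "\<lambda>lam. (if lam \<in> S then c lam else 0) + (if lam \<in> S' then c' lam else 0)"
  have fin: "finite (S \<union> S')" using S S' by simp
  have "(\<Sum>lam\<in>S \<union> S'. sscale (?c lam) (commBhat a b lam)) =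
     (\<Sum>lam\<in>S \<union> S'. if lam \<in> S then sscale (c lam) (commBhat a b lam) else 0) +
     (\<Sum>lam\<in>S \<union> S'. if lam \<in> S' then sscale (c' lam) (commBhat a b lam) else 0)"
  proof -
    have "sscale (?c lam) (commBhat a b lam) =
      (if lam \<in> S then sscale (c lam) (commBhat a b lam) else 0) +
      (if lam \<in> S' then sscale (c' lam) (commBhat a b lam) else 0)" for lam
      by (simp add: sscale_add_left sscale_zero)
    then show ?thesis by (simp add: sum.distrib)
  qed
  also have "\<dots> = p + q"
    using fin by (simp add: sum.inter_restrict[symmetric] S(3) S'(3) Int_absorb1 Int_absorb2
        Int_commute sup_commute inf_sup_absorb)
  finally show ?thesis unfolding V_def using fin S(2) S'(2)
    by (intro CollectI exI[of _ "S \<union> S'"] exI[of _ ?c]) auto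
qed

lemma V_scale:
  assumes "p \<in> V a b" shows "sscale x p \<in> V a b"
proof -
  obtain S c where S: "finite S" "\<forall>lam\<in>S. is_partition lam"
    "p = (\<Sum>lam\<in>S. sscale (c lam) (commBhat a b lam))" using assms(1) by (auto simp: V_def)
  have "sscale x p = (\<Sum>lam\<in>S. sscale (x * c lam) (commBhat a b lam))"
    by (simp add: S(3) sscale_sum sscale_sscale)
  then show ?thesis unfolding V_def using S
    by (intro CollectI exI[of _ S] exI[of _ "\<lambda>lam. x * c lam"]) auto
qed

lemma V_sum: "finite A \<Longrightarrow> (\<And>i. i \<in> A \<Longrightarrow> f i \<in> V a b) \<Longrightarrow> sum f A \<in> V a b"
  by (induction A rule: finite_induct) (auto intro: V_zero V_add)

lemma sscale_minus1: "sscale (-1) q = - q"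
  by (simp add: sscale_def single_uminus)

lemma V_diff: "p \<in> V a b \<Longrightarrow> q \<in> V a b \<Longrightarrow> p - q \<in> V a b"
  using V_add[of p a b "sscale (-1) q"] V_scale[of q a b "-1"] by (simp add: sscale_minus1)

lemma V_g: "is_partition l \<Longrightarrow> commBhat a b l \<in> V a b"
  unfolding V_def by (intro CollectI exI[of _ "{l}"] exI[of _ "\<lambda>_. 1"]) (auto simp: sscale_one)

lemma commH_in_V:
  assumes a: "a \<noteq> 0" and be0: "0 \<notin> set be0"
  shows "commH be0 \<in> V a b"
  using be0
proof (induction "sum_list be0 - length be0" arbitrary: be0 rule: less_induct)
  case less
  define l where "l = rev (sort be0)"
  have ml: "mset l = mset be0" by (simp add: l_def)
  have sl: "sum_list l = sum_list be0" and ll: "length l = length be0"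
    using ml by (metis mset_eq_length sum_mset_sum_list)+
  have lpos: "0 \<notin> set l" using less.prems by (simp add: l_def)
  have lpart: "is_partition l" using lpos
    by (simp add: is_partition_def l_def sorted_wrt_rev)
  have hl: "commH l = commH be0" by (simp add: commH_def ml)
  let ?w = "\<lambda>be. a ^ (sum_list l - length be) * b ^ (length be - length l)"
  define R where "R = (\<Sum>be\<in>Bs l - {l}. sscale (?w be) (commH be))"
  have "commBhat a b l = sscale (?w l) (commH l) + R"
    unfolding commBhat_Bs R_def
    using Bs_self[OF lpos] Bs_finite[of l] by (simp add: sum.remove)
  then have eq: "sscale (?w l) (commH l) = commBhat a b l - R" by simp
  have wl: "?w l \<noteq> 0" using a by simp
  have "commH l = sscale (inverse (?w l)) (commBhat a b l - R)"
    unfolding eq[symmetric] sscale_sscale using wl by (simp add: sscale_one)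
  moreover have "R \<in> V a b"
    unfolding R_def
  proof (intro V_sum V_scale)
    show "finite (Bs l - {l})" using Bs_finite by simp
  next
    fix be assume be: "be \<in> Bs l - {l}"
    have bpos: "0 \<notin> set be" and sb: "sum_list be = sum_list l"
      using be by (auto simp: Bs_def compositions_def)
    have "length l < length be"
      using refines_len[OF lpos, of be] be by (auto simp: Bs_def)
    moreover have "length be \<le> sum_list be" using len_le_sum[OF bpos] .
    ultimately have "sum_list be - length be < sum_list be0 - length be0"
      using sb sl ll by linarith
    then show "commH be \<in> V a b" using less.hyps bpos by blast
  qed
  ultimately have "commH l \<in> V a b" using V_diff V_scale V_g[OF lpart] by metis
  then show ?case using hl by simp
qed

lemma Sym_in_V:
  assumes a: "a \<noteq> 0" and p: "p \<in> Sym" shows "p \<in> V a b"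
proof -
  have "p = (\<Sum>m\<in>Poly_Mapping.keys p. Poly_Mapping.single m (Poly_Mapping.lookup p m))"
    by (rule poly_mapping_eqI) (simp add: lookup_sum lookup_single when_def in_keys_iff sum.delta' )
  also have "\<dots> = (\<Sum>m\<in>Poly_Mapping.keys p. sscale (Poly_Mapping.lookup p m) (commH (sorted_list_of_multiset m)))"
    by (simp add: sscale_def commH_def mult_single)
  also have "\<dots> \<in> V a b"
  proof (intro V_sum V_scale commH_in_V[OF a])
    fix m assume "m \<in> Poly_Mapping.keys p"
    then show "0 \<notin> set (sorted_list_of_multiset m)" using p by (simp add: Sym_def)
  qed simp
  finally show ?thesis .
qed

lemma indep:
  assumes a: "a \<noteq> 0" and S: "finite S" "\<forall>lam\<in>S. is_partition lam"
    and z: "(\<Sum>lam\<in>S. sscale (c lam) (commBhat a b lam)) = 0"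
  shows "\<forall>lam\<in>S. c lam = 0"
proof (rule ccontr)
  assume nz: "\<not> (\<forall>lam\<in>S. c lam = 0)"
  define T where "T = {lam \<in> S. c lam \<noteq> 0}"
  have T: "finite T" "T \<noteq> {}" using S(1) nz by (auto simp: T_def)
  define n0 where "n0 = Min (length ` T)"
  have "n0 \<in> length ` T" unfolding n0_def using T by simp
  then obtain l where lT: "l \<in> T" and ln: "length l = n0" by auto
  have lmin: "\<And>l'. l' \<in> T \<Longrightarrow> length l \<le> length l'"
    using ln T by (simp add: n0_def)
  have lS: "l \<in> S" and cl: "c l \<noteq> 0" using lT by (auto simp: T_def)
  have lpart: "is_partition l" using lS S(2) by blast
  have "0 = Poly_Mapping.lookup (\<Sum>lam\<in>S. sscale (c lam) (commBhat a b lam)) (mset l)"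
    using z by simp
  also have "\<dots> = (\<Sum>lam\<in>S. c lam * Poly_Mapping.lookup (commBhat a b lam) (mset l))"
    by (simp add: lookup_sum lookup_sscale)
  also have "\<dots> = (\<Sum>lam\<in>S. if lam = l then c l * a ^ (sum_list l - length l) else 0)"
  proof (rule sum.cong[OF refl])
    fix lam assume lam: "lam \<in> S"
    show "c lam * Poly_Mapping.lookup (commBhat a b lam) (mset l) =
      (if lam = l then c l * a ^ (sum_list l - length l) else 0)"
    proof (cases "c lam = 0")
      case True
      then show ?thesis using cl by auto
    next
      case False
      then have "lam \<in> T" using lam by (simp add: T_def)
      then have le: "size (mset l) \<le> length lam" using lmin by simp
      have lp: "is_partition lam" using lam S(2) by blast
      then have lpos: "0 \<notin> set lam" by (simp add: is_partition_def)
      have "mset l = mset lam \<longleftrightarrow> lam = l"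
        using partition_unique[OF lpart lp] by auto
      then show ?thesis using lookup_commBhat[OF lpos le, of a b] by auto
    qed
  qed
  also have "\<dots> = c l * a ^ (sum_list l - length l)"
    using lS S(1) by (simp add: sum.delta')
  finally show False using cl a by simp
qed

theorem proposition4p13:
  fixes a b :: complex
  assumes "a \<noteq> 0"
  shows "(\<forall>lam. is_partition lam \<longrightarrow> commBhat a b lam \<in> Sym)
    \<and> (\<forall>S c. finite S \<and> (\<forall>lam\<in>S. is_partition lam)
          \<and> (\<Sum>lam\<in>S. sscale (c lam) (commBhat a b lam)) = 0
          \<longrightarrow> (\<forall>lam\<in>S. c lam = 0))
    \<and> (\<forall>p \<in> Sym. \<exists>S c. finite S \<and> (\<forall>lam\<in>S. is_partition lam)
          \<and> p = (\<Sum>lam\<in>S. sscale (c lam) (commBhat a b lam)))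
    \<and> (\<forall>lam mu. is_partition lam \<and> is_partition mu \<longrightarrow>
          commBhat a b lam * commBhat a b mu = commBhat a b (part_mult lam mu))"
proof (intro conjI allI impI ballI)
  fix lam assume "is_partition lam"
  show "commBhat a b lam \<in> Sym" by (rule commBhat_Sym)
next
  fix S c lam
  assume h: "finite S \<and> (\<forall>lam\<in>S. is_partition lam) \<and> (\<Sum>lam\<in>S. sscale (c lam) (commBhat a b lam)) = 0"
    and "lam \<in> S"
  then show "c lam = 0" using indep[OF assms, of S c] by blast
next
  fix p assume "p \<in> Sym"
  then show "\<exists>S c. finite S \<and> (\<forall>lam\<in>S. is_partition lam)
          \<and> p = (\<Sum>lam\<in>S. sscale (c lam) (commBhat a b lam))"
    using Sym_in_V[OF assms] by (auto simp: V_def)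
next
  fix lam mu assume h: "is_partition lam \<and> is_partition mu"
  then have p1: "0 \<notin> set lam" and p2: "0 \<notin> set mu" by (auto simp: is_partition_def)
  have p3: "0 \<notin> set (part_mult lam mu)" using p1 p2 by (simp add: part_mult_def)
  have m: "mset (part_mult lam mu) = mset lam + mset mu" by (simp add: part_mult_def)
  show "commBhat a b lam * commBhat a b mu = commBhat a b (part_mult lam mu)"
    unfolding commBhat_mset[OF p1] commBhat_mset[OF p2] commBhat_mset[OF p3] m
    by simp
qed

end
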